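(* Let $p$ be a prime and $K$ a finite extension of $\mathbb{Q}_p$. Suppose that $B$ is a nonempty finite set of elements of $K$ such that $|\beta|_p<1$ for each $\beta\in B$. For each $\beta\in B$ let $c_\beta:\mathbb{Z}_p\to K$ be a continuous function, and for $n\in\mathbb N$ define $s(n)=\sum_{\beta\in B}c_\beta(n)\beta^n$. If there is a twisted interpolation of $s(n)_{n\ge0}$ to $\mathbb{Z}_p$, then $s(n)=0$ for all $n\ge 0$.
   Context: $\mathbb N=\{0,1,2,\dots\}$; $|\cdot|_p$ is the unique absolute value on $K$ extending the $p$-adic one. Let $q\ge1$ be a power of $p$. A twisted interpolation of $s(n)_{n\ge0}$ to $\mathbb{Z}_p$ is a family $\{(s_j,A_j):j\in J\}$ where $\mathbb N=\bigcup_{j\in J}A_j$ is a finite partition with each $A_j$ dense in $r+q\mathbb{Z}_p$ for some $0\le r\le q-1$, $L$ is a finite extension of $\mathbb{Q}_p$, each $s_j:\mathbb{Z}_p\to L$ is continuous, and $s(n)=s_j(n)$ for all $n\in A_j$ and $j\in J$. *)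

theory Defs
  imports "HOL-Analysis.Analysis" "HOL-Computational_Algebra.Primes"
begin

text \<open>Ambient setting: a field F (a type 'a) carrying a real-valued absolute value av
  which is non-archimedean, complete, and restricts to the normalised p-adic absolute
  value on the integers (hence on the rationals).  Inside such an F (e.g. C_p), Q_p is
  the closure of Q, Z_p is the closure of Z, and finite extensions of Q_p are the
  subfields of F containing Q_p that are finite-dimensional over Q_p.  The absolute
  value of F restricted to such a subfield is the unique extension of the p-adic one.\<close>

definition padic_valued_field :: "nat \<Rightarrow> ('a::field \<Rightarrow> real) \<Rightarrow> bool" where
  "padic_valued_field p av \<longleftrightarrow>
     (\<forall>x. av x \<ge> 0) \<and>
     (\<forall>x. av x = 0 \<longleftrightarrow> x = 0) \<and>
     (\<forall>x y. av (x * y) = av x * av y) \<and>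
     (\<forall>x y. av (x + y) \<le> max (av x) (av y)) \<and>
     (\<forall>n::int. n \<noteq> 0 \<longrightarrow> av (of_int n) = inverse (real p ^ multiplicity (int p) n)) \<and>
     (\<forall>X::nat \<Rightarrow> 'a.
        (\<forall>e>0. \<exists>N. \<forall>m\<ge>N. \<forall>n\<ge>N. av (X m - X n) < e) \<longrightarrow>
        (\<exists>l. \<forall>e>0. \<exists>N. \<forall>n\<ge>N. av (X n - l) < e))"

definition Zp :: "('a::field \<Rightarrow> real) \<Rightarrow> 'a set" where
  "Zp av = {x. \<forall>e>0. \<exists>n::int. av (x - of_int n) < e}"

definition Qp :: "('a::field_char_0 \<Rightarrow> real) \<Rightarrow> 'a set" where
  "Qp av = {x. \<forall>e>0. \<exists>q::rat. av (x - of_rat q) < e}"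

definition is_subfield :: "'a::field set \<Rightarrow> bool" where
  "is_subfield K \<longleftrightarrow> 0 \<in> K \<and> 1 \<in> K \<and>
     (\<forall>x\<in>K. \<forall>y\<in>K. x + y \<in> K \<and> x * y \<in> K) \<and>
     (\<forall>x\<in>K. - x \<in> K \<and> inverse x \<in> K)"

definition finite_ext_Qp :: "('a::field_char_0 \<Rightarrow> real) \<Rightarrow> 'a set \<Rightarrow> bool" where
  "finite_ext_Qp av K \<longleftrightarrow> is_subfield K \<and> Qp av \<subseteq> K \<and>
     (\<exists>S. finite S \<and> S \<subseteq> K \<and>
        (\<forall>x\<in>K. \<exists>c. (\<forall>s\<in>S. c s \<in> Qp av) \<and> x = (\<Sum>s\<in>S. c s * s)))"

definition cont_Zp_into :: "('a::field \<Rightarrow> real) \<Rightarrow> 'a set \<Rightarrow> ('a \<Rightarrow> 'a) \<Rightarrow> bool" where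
  "cont_Zp_into av L f \<longleftrightarrow> (\<forall>x\<in>Zp av. f x \<in> L) \<and>
     (\<forall>x\<in>Zp av. \<forall>e>0. \<exists>d>0. \<forall>y\<in>Zp av. av (y - x) < d \<longrightarrow> av (f y - f x) < e)"

definition dense_in_class :: "('a::field \<Rightarrow> real) \<Rightarrow> nat set \<Rightarrow> nat \<Rightarrow> nat \<Rightarrow> bool" where
  "dense_in_class av A r q \<longleftrightarrow>
     (\<forall>n\<in>A. \<exists>z\<in>Zp av. of_nat n = of_nat r + of_nat q * z) \<and>
     (\<forall>z\<in>Zp av. \<forall>e>0. \<exists>n\<in>A. av (of_nat n - (of_nat r + of_nat q * z)) < e)"

definition twisted_interpolation ::
  "nat \<Rightarrow> ('a::field_char_0 \<Rightarrow> real) \<Rightarrow> (nat \<Rightarrow> 'a) \<Rightarrow> nat \<Rightarrow> 'j set \<Rightarrow> ('j \<Rightarrow> nat set)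
     \<Rightarrow> 'a set \<Rightarrow> ('j \<Rightarrow> 'a \<Rightarrow> 'a) \<Rightarrow> bool" where
  "twisted_interpolation p av s q J A L sj \<longleftrightarrow>
     (\<exists>k. q = p ^ k) \<and> q \<ge> 1 \<and>
     finite J \<and> (\<Union>j\<in>J. A j) = UNIV \<and>
     (\<forall>i\<in>J. \<forall>j\<in>J. i \<noteq> j \<longrightarrow> A i \<inter> A j = {}) \<and>
     (\<forall>j\<in>J. \<exists>r. r \<le> q - 1 \<and> dense_in_class av (A j) r q) \<and>
     finite_ext_Qp av L \<and>
     (\<forall>j\<in>J. cont_Zp_into av L (sj j)) \<and>
     (\<forall>j\<in>J. \<forall>n\<in>A j. s n = sj j (of_nat n))"

definition has_twisted_interpolation :: "nat \<Rightarrow> ('a::field_char_0 \<Rightarrow> real) \<Rightarrow> (nat \<Rightarrow> 'a) \<Rightarrow> bool" where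
  "has_twisted_interpolation p av s \<longleftrightarrow>
     (\<exists>q (J::nat set) A L sj. twisted_interpolation p av s q J A L sj)"

end

theory Submission
  imports Defs
begin

context
  fixes p :: nat and av :: "'a::field_char_0 \<Rightarrow> real"
  assumes pv: "padic_valued_field p av"
begin

lemma av_nonneg: "av x \<ge> 0" by (rule pv[unfolded padic_valued_field_def, THEN conjunct1, rule_format])
lemma av_zero_iff: "av x = 0 \<longleftrightarrow> x = 0" by (rule pv[unfolded padic_valued_field_def, THEN conjunct2, THEN conjunct1, rule_format])
lemma av_mult: "av (x * y) = av x * av y" by (rule pv[unfolded padic_valued_field_def, THEN conjunct2, THEN conjunct2, THEN conjunct1, rule_format])
lemma av_add: "av (x + y) \<le> max (av x) (av y)" by (rule pv[unfolded padic_valued_field_def, THEN conjunct2, THEN conjunct2, THEN conjunct2, THEN conjunct1, rule_format])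
lemma av_int: "n \<noteq> 0 \<Longrightarrow> av (of_int n) = inverse (real p ^ multiplicity (int p) n)"
  by (rule pv[unfolded padic_valued_field_def, THEN conjunct2, THEN conjunct2, THEN conjunct2, THEN conjunct2, THEN conjunct1, rule_format])

lemma av_one: "av 1 = 1"
  using av_int[of 1] by simp

lemma av_minus_one: "av (-1) = 1"
proof -
  have "av (-1) * av (-1) = 1" using av_mult[of "-1" "-1"] av_one by simp
  moreover have "av (-1) \<ge> 0" by (rule av_nonneg)
  ultimately have "(av (-1) - 1) * (av (-1) + 1) = 0" "av (-1) + 1 > 0"
    by (simp_all add: algebra_simps)
  then show ?thesis by simp
qed

lemma av_minus: "av (- x) = av x"
  using av_mult[of "-1" x] av_minus_one by simp

lemma av_diff_commute: "av (x - y) = av (y - x)"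
  using av_minus[of "x - y"] by simp

lemma av_power: "av (x ^ n) = av x ^ n"
  by (induction n) (simp_all add: av_one av_mult)

lemma av_sum_less:
  assumes "finite S" "e > 0" "\<forall>x\<in>S. av (f x) < e"
  shows "av (sum f S) < e"
  using assms
proof (induction S rule: finite_induct)
  case empty then show ?case using av_zero_iff[of 0] by simp
next
  case (insert x F)
  then have "max (av (f x)) (av (sum f F)) < e" by simp
  then show ?case using le_less_trans[OF av_add[of "f x" "sum f F"]] insert.hyps by simp
qed

lemma of_nat_Zp: "of_nat n \<in> Zp av"
  unfolding Zp_def using av_zero_iff[of 0]
  by (auto intro!: exI[of _ "int n"])

lemma Zp_add_nat: "z \<in> Zp av \<Longrightarrow> z + of_nat t \<in> Zp av"
  unfolding Zp_def
proof (safe)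
  fix e :: real assume "\<forall>e>0. \<exists>n::int. av (z - of_int n) < e" "e > 0"
  then obtain n :: int where "av (z - of_int n) < e" by blast
  then show "\<exists>n::int. av (z + of_nat t - of_int n) < e"
    by (intro exI[of _ "n + int t"]) (simp add: algebra_simps)
qed

end

theorem theorem3p7:
  fixes p :: nat and av :: "'a::field_char_0 \<Rightarrow> real"
    and K :: "'a set" and B :: "'a set" and c :: "'a \<Rightarrow> 'a \<Rightarrow> 'a"
  assumes "prime p"
    and "padic_valued_field p av"
    and "finite_ext_Qp av K"
    and "finite B" and "B \<noteq> {}" and "B \<subseteq> K"
    and "\<forall>\<beta>\<in>B. av \<beta> < 1"
    and "\<forall>\<beta>\<in>B. cont_Zp_into av K (c \<beta>)"
    and "has_twisted_interpolation p av (\<lambda>n. \<Sum>\<beta>\<in>B. c \<beta> (of_nat n) * \<beta> ^ n)"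
  shows "\<forall>n. (\<Sum>\<beta>\<in>B. c \<beta> (of_nat n) * \<beta> ^ n) = 0"
proof
  fix n0 :: nat
  note pv = assms(2)
  define s where "s = (\<lambda>n::nat. \<Sum>\<beta>\<in>B. c \<beta> (of_nat n) * \<beta> ^ n)"
  from assms(9) obtain q and J :: "nat set" and A L sj
    where TI: "twisted_interpolation p av s q J A L sj"
    unfolding has_twisted_interpolation_def s_def by blast
  then obtain k where qk: "q = p ^ k" unfolding twisted_interpolation_def by blast
  from TI have "(\<Union>j\<in>J. A j) = UNIV" unfolding twisted_interpolation_def by blast
  then obtain j where jJ: "j \<in> J" and n0A: "n0 \<in> A j" by blast
  from TI jJ obtain r where dc: "dense_in_class av (A j) r q"
    unfolding twisted_interpolation_def by blast
  from TI jJ have sjc: "cont_Zp_into av L (sj j)" unfolding twisted_interpolation_def by blast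
  from TI jJ have agree: "\<forall>n\<in>A j. s n = sj j (of_nat n)" unfolding twisted_interpolation_def by blast
  from dc n0A obtain z0 where z0: "z0 \<in> Zp av" "of_nat n0 = of_nat r + of_nat q * z0"
    unfolding dense_in_class_def by blast
  have dens: "\<forall>z\<in>Zp av. \<forall>e>0. \<exists>n\<in>A j. av (of_nat n - (of_nat r + of_nat q * z)) < e"
    using dc unfolding dense_in_class_def by blast
  have p2: "real p \<ge> 2" using assms(1) prime_ge_2_nat by (metis of_nat_le_iff of_nat_numeral)
  have small: "av (sj j (of_nat n0)) < \<epsilon>" if eps: "\<epsilon> > 0" for \<epsilon>
  proof -
    have sjH: "\<forall>x\<in>Zp av. \<forall>e>0. \<exists>d>0. \<forall>y\<in>Zp av. av (y - x) < d \<longrightarrow> av (sj j y - sj j x) < e"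
      using sjc unfolding cont_Zp_into_def by blast
    obtain d where d: "d > 0"
      "\<forall>y\<in>Zp av. av (y - of_nat n0) < d \<longrightarrow> av (sj j y - sj j (of_nat n0)) < \<epsilon>"
      using sjH[rule_format, OF of_nat_Zp[OF pv] eps] by blast
    have "\<forall>\<beta>\<in>B. \<exists>dd>0. \<forall>y\<in>Zp av. av (y - of_nat n0) < dd \<longrightarrow> av (c \<beta> y - c \<beta> (of_nat n0)) < 1"
    proof
      fix \<beta> assume "\<beta> \<in> B"
      then have "cont_Zp_into av K (c \<beta>)" using assms(8) by blast
      then have H: "\<forall>x\<in>Zp av. \<forall>e>0. \<exists>d>0. \<forall>y\<in>Zp av. av (y - x) < d \<longrightarrow> av (c \<beta> y - c \<beta> x) < e"
        unfolding cont_Zp_into_def by blast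
      show "\<exists>dd>0. \<forall>y\<in>Zp av. av (y - of_nat n0) < dd \<longrightarrow> av (c \<beta> y - c \<beta> (of_nat n0)) < 1"
        using H[rule_format, OF of_nat_Zp[OF pv] zero_less_one] .
    qed
    from bchoice[OF this] obtain dd where dd: "\<forall>\<beta>\<in>B. dd \<beta> > 0 \<and> (\<forall>y\<in>Zp av. av (y - of_nat n0) < dd \<beta> \<longrightarrow> av (c \<beta> y - c \<beta> (of_nat n0)) < 1)"
      by blast
    define M where "M = (\<lambda>\<beta>. max 1 (av (c \<beta> (of_nat n0))))"
    have "\<forall>\<^sub>F n in sequentially. \<forall>\<beta>\<in>B. M \<beta> * av \<beta> ^ n < \<epsilon>"
    proof (rule eventually_ball_finite[OF assms(4)], intro ballI)
      fix \<beta> assume "\<beta> \<in> B"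
      then have "av \<beta> < 1" using assms(7) by blast
      moreover have "av \<beta> \<ge> 0" by (rule av_nonneg[OF pv])
      ultimately have "(\<lambda>n. av \<beta> ^ n) \<longlonglongrightarrow> 0" by (simp add: LIMSEQ_power_zero)
      then have "(\<lambda>n. M \<beta> * av \<beta> ^ n) \<longlonglongrightarrow> M \<beta> * 0" by (intro tendsto_mult tendsto_const)
      then show "\<forall>\<^sub>F n in sequentially. M \<beta> * av \<beta> ^ n < \<epsilon>"
        using eps by (simp add: order_tendstoD(2))
    qed
    then obtain N where N: "\<forall>n\<ge>N. \<forall>\<beta>\<in>B. M \<beta> * av \<beta> ^ n < \<epsilon>"
      unfolding eventually_sequentially by blast
    define \<delta> where "\<delta> = Min (insert 1 ((\<lambda>m. av (of_nat m - of_nat n0)) ` ({..N} - {n0})))"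
    have \<delta>pos: "\<delta> > 0" unfolding \<delta>_def
    proof (subst Min_gr_iff, simp, simp, intro ballI)
      fix x assume "x \<in> insert 1 ((\<lambda>m. av (of_nat m - of_nat n0)) ` ({..N} - {n0}))"
      then show "0 < x"
      proof
        assume "x = 1" then show ?thesis by simp
      next
        assume "x \<in> (\<lambda>m. av (of_nat m - of_nat n0)) ` ({..N} - {n0})"
        then obtain m where "m \<noteq> n0" "x = av (of_nat m - (of_nat n0 :: 'a))" by auto
        then show ?thesis using av_nonneg[OF pv, of "of_nat m - of_nat n0"]
          av_zero_iff[OF pv, of "of_nat m - of_nat n0"] by auto
      qed
    qed
    have \<delta>le: "\<delta> \<le> av (of_nat m - of_nat n0)" if "m \<le> N" "m \<noteq> n0" for m
      unfolding \<delta>_def using that by (intro Min_le) auto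
    define D where "D = Min (insert d (insert \<delta> (dd ` B)))"
    have Dpos: "D > 0" unfolding D_def using d(1) \<delta>pos dd assms(4) by (subst Min_gr_iff) auto
    have Dgen: "D \<le> x" if "x \<in> insert d (insert \<delta> (dd ` B))" for x
      unfolding D_def using assms(4) that by (intro Min_le) auto
    have Dle: "D \<le> d" "D \<le> \<delta>" "\<forall>\<beta>\<in>B. D \<le> dd \<beta>" by (auto intro: Dgen)
    have ip1: "inverse (real p) < 1" using p2 by (intro inverse_less_1_iff[THEN iffD2]) simp
    then obtain m where m: "inverse (real p) ^ m < D"
      using real_arch_pow_inv[OF Dpos ip1] by blast
    define t where "t = p ^ m"
    have qt_int: "(of_nat q * of_nat t :: 'a) = of_int (int p ^ (k + m))"
      unfolding qk t_def by (simp add: power_add)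
    have avqt: "av (of_nat q * of_nat t) = inverse (real p ^ (k + m))"
      unfolding qt_int using av_int[OF pv, of "int p ^ (k+m)"] assms(1)
      by (simp add: prime_gt_0_nat)
    have "inverse (real p ^ (k + m)) \<le> inverse (real p) ^ m"
    proof -
      have "inverse (real p) ^ (k + m) \<le> inverse (real p) ^ m"
        using ip1 by (intro power_decreasing) auto
      then show ?thesis by (simp add: power_inverse)
    qed
    then have avqtD: "av (of_nat q * of_nat t :: 'a) < D" using m avqt by linarith
    have avqtpos: "av (of_nat q * of_nat t :: 'a) > 0" using avqt p2 by simp
    have zZ: "z0 + of_nat t \<in> Zp av" using Zp_add_nat[OF pv z0(1)] .
    from dens zZ avqtpos obtain n where nA: "n \<in> A j" and
      nclose: "av (of_nat n - (of_nat r + of_nat q * (z0 + of_nat t))) < av (of_nat q * of_nat t :: 'a)"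
      by blast
    have eq: "(of_nat r + of_nat q * (z0 + of_nat t) :: 'a) = of_nat n0 + of_nat q * of_nat t"
      using z0(2) by (simp add: algebra_simps)
    have nclose': "av (of_nat n - (of_nat n0 + of_nat q * of_nat t)) < av (of_nat q * of_nat t :: 'a)"
      using nclose eq by simp
    have "av (of_nat n - of_nat n0 :: 'a) \<le> max (av (of_nat n - (of_nat n0 + of_nat q * of_nat t))) (av (of_nat q * of_nat t :: 'a))"
      using av_add[OF pv, of "of_nat n - (of_nat n0 + of_nat q * of_nat t)" "of_nat q * of_nat t"]
      by (simp add: algebra_simps)
    then have nn0: "av (of_nat n - of_nat n0 :: 'a) < D" using nclose' avqtD by linarith
    have "n \<noteq> n0"
    proof
      assume "n = n0"
      then show False using nclose' av_minus[OF pv, of "of_nat q * of_nat t"] by simp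
    qed
    have nN: "n \<ge> N"
    proof (rule ccontr)
      assume "\<not> n \<ge> N"
      then have "\<delta> \<le> av (of_nat n - of_nat n0 :: 'a)" using \<delta>le \<open>n \<noteq> n0\<close> by simp
      then show False using nn0 Dle(2) by linarith
    qed
    have nZ: "of_nat n \<in> Zp av" by (rule of_nat_Zp[OF pv])
    have "av (s n) < \<epsilon>"
      unfolding s_def
    proof (rule av_sum_less[OF pv assms(4) eps], intro ballI)
      fix \<beta> assume bB: "\<beta> \<in> B"
      have "av (of_nat n - of_nat n0 :: 'a) < dd \<beta>" using nn0 Dle(3) bB by fastforce
      then have c1: "av (c \<beta> (of_nat n) - c \<beta> (of_nat n0)) < 1" using dd bB nZ by blast
      have "av (c \<beta> (of_nat n)) \<le> max (av (c \<beta> (of_nat n) - c \<beta> (of_nat n0))) (av (c \<beta> (of_nat n0)))"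
        using av_add[OF pv, of "c \<beta> (of_nat n) - c \<beta> (of_nat n0)" "c \<beta> (of_nat n0)"] by simp
      then have cM: "av (c \<beta> (of_nat n)) \<le> M \<beta>" using c1 unfolding M_def by linarith
      have "av (c \<beta> (of_nat n) * \<beta> ^ n) = av (c \<beta> (of_nat n)) * av \<beta> ^ n"
        by (simp add: av_mult[OF pv] av_power[OF pv])
      also have "\<dots> \<le> M \<beta> * av \<beta> ^ n"
        by (rule mult_right_mono[OF cM]) (simp add: av_nonneg[OF pv])
      also have "\<dots> < \<epsilon>" using N nN bB by blast
      finally show "av (c \<beta> (of_nat n) * \<beta> ^ n) < \<epsilon>" .
    qed
    then have s1: "av (sj j (of_nat n)) < \<epsilon>" using agree nA by simp
    have s2: "av (sj j (of_nat n) - sj j (of_nat n0)) < \<epsilon>"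
      using d(2) nZ nn0 Dle(1) by simp
    have "av (sj j (of_nat n0)) \<le> max (av (sj j (of_nat n))) (av (- (sj j (of_nat n) - sj j (of_nat n0))))"
      using av_add[OF pv, of "sj j (of_nat n)" "- (sj j (of_nat n) - sj j (of_nat n0))"] by simp
    moreover have "av (sj j (of_nat n0) - sj j (of_nat n)) < \<epsilon>"
      using s2 av_diff_commute[OF pv] by metis
    ultimately show ?thesis using s1 by simp
  qed
  have "av (sj j (of_nat n0)) = 0"
    using small av_nonneg[OF pv, of "sj j (of_nat n0)"]
    by (metis less_irrefl order_le_less)
  then have "sj j (of_nat n0) = 0" using av_zero_iff[OF pv] by blast
  then show "(\<Sum>\<beta>\<in>B. c \<beta> (of_nat n0) * \<beta> ^ n0) = 0" using agree n0A unfolding s_def by simp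
qed

end
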